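(* Let $\hat g\colon M_2\to\mathbb{R}$ be a real-valued function on the set $M_2=\{(x_1,x_2)\in(0,\infty)^2 : x_1\geq x_2\}$, and let $W\colon \mathrm{GL}^+(2)\to\mathbb{R}$ be given by $W(F)=\hat g(\lambda_{\max}(F),\lambda_{\min}(F))$, where $\lambda_{\max}(F)\geq\lambda_{\min}(F)$ are the singular values of $F$. Suppose $\hat g\in C^2(\operatorname{int} M_2)\cap C^1(M_2)$, and suppose $W$ is Legendre-Hadamard elliptic at each $F\in\mathrm{GL}^+(2)$ with simple singular values $\lambda_{\max}(F)\neq\lambda_{\min}(F)$. Then $W$ is rank-one convex on $\mathrm{GL}^+(2)$.
   Context: $\mathrm{GL}^+(n)$ denotes the group of real invertible $n\times n$ matrices with positive determinant. $\operatorname{int}M_2=\{(x_1,x_2)\in(0,\infty)^2: x_1>x_2\}$. $\hat g\in C^1(M_2)$ means that $\hat g$ is continuously differentiable on $M_2$ up to the boundary $\{(x,x):x>0\}$ relative to $(0,\infty)^2$, i.e. $\hat g$ is the restriction of a continuously differentiable function on $(0,\infty)^2$. A function $W\colon\mathrm{GL}^+(n)\to\mathbb{R}$ is rank-one convex if for all $F_1,F_2\in\mathrm{GL}^+(n)$ with $\operatorname{rank}(F_2-F_1)=1$ and all $t\in[0,1]$ one has $W((1-t)F_1+tF_2)\leq(1-t)W(F_1)+tW(F_2)$. $W$ is Legendre-Hadamard elliptic at $F$ if $W$ is twice differentiable at $F$ and $D^2W[F].(\xi\otimes\eta,\xi\otimes\eta)\geq0$ for all $\xi,\eta\in\mathbb{R}^n$.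 *)

theory Defs
  imports "HOL-Analysis.Analysis"
begin

type_synonym mat2 = "real^2^2"

definition GLp2 :: "mat2 set" where
  "GLp2 = {F. det F > 0}"

definition sing_vals :: "mat2 \<Rightarrow> real set" where
  "sing_vals F = {s. s \<ge> 0 \<and> (\<exists>v::real^2. v \<noteq> 0 \<and> (transpose F ** F) *v v = (s^2) *\<^sub>R v)}"

definition lam_max :: "mat2 \<Rightarrow> real" where
  "lam_max F = Max (sing_vals F)"

definition lam_min :: "mat2 \<Rightarrow> real" where
  "lam_min F = Min (sing_vals F)"

definition M2 :: "(real \<times> real) set" where
  "M2 = {(x1, x2). x1 > 0 \<and> x2 > 0 \<and> x1 \<ge> x2}"

definition intM2 :: "(real \<times> real) set" where
  "intM2 = {(x1, x2). x1 > 0 \<and> x2 > 0 \<and> x1 > x2}"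

definition pos_quadrant :: "(real \<times> real) set" where
  "pos_quadrant = {(x1, x2). x1 > 0 \<and> x2 > 0}"

definition C1_on :: "('a::real_normed_vector \<Rightarrow> real) \<Rightarrow> 'a set \<Rightarrow> bool" where
  "C1_on f S \<longleftrightarrow> (\<exists>f' :: 'a \<Rightarrow> ('a \<Rightarrow>\<^sub>L real).
      (\<forall>x\<in>S. (f has_derivative blinfun_apply (f' x)) (at x)) \<and> continuous_on S f')"

definition C2_on :: "('a::real_normed_vector \<Rightarrow> real) \<Rightarrow> 'a set \<Rightarrow> bool" where
  "C2_on f S \<longleftrightarrow> (\<exists>(f' :: 'a \<Rightarrow> ('a \<Rightarrow>\<^sub>L real)) (f'' :: 'a \<Rightarrow> ('a \<Rightarrow>\<^sub>L ('a \<Rightarrow>\<^sub>L real))).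
      (\<forall>x\<in>S. (f has_derivative blinfun_apply (f' x)) (at x)) \<and>
      (\<forall>x\<in>S. (f' has_derivative blinfun_apply (f'' x)) (at x)) \<and>
      continuous_on S f'')"

text \<open>g \<in> C^1(M_2): g is the restriction to M_2 of a C^1 function on (0,\<infinity>)^2.\<close>
definition C1_M2 :: "(real \<times> real \<Rightarrow> real) \<Rightarrow> bool" where
  "C1_M2 g \<longleftrightarrow> (\<exists>G. C1_on G pos_quadrant \<and> (\<forall>x\<in>M2. G x = g x))"

definition dyad :: "real^2 \<Rightarrow> real^2 \<Rightarrow> mat2" where
  "dyad \<xi> \<eta> = (\<chi> i j. \<xi>$i * \<eta>$j)"

definition LH_elliptic_at :: "(mat2 \<Rightarrow> real) \<Rightarrow> mat2 \<Rightarrow> bool" where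
  "LH_elliptic_at W F \<longleftrightarrow> (\<exists>(W' :: mat2 \<Rightarrow> (mat2 \<Rightarrow>\<^sub>L real)) (W'' :: mat2 \<Rightarrow>\<^sub>L (mat2 \<Rightarrow>\<^sub>L real)).
      (\<forall>\<^sub>F G in at F. (W has_derivative blinfun_apply (W' G)) (at G)) \<and>
      (W has_derivative blinfun_apply (W' F)) (at F) \<and>
      (W' has_derivative blinfun_apply W'') (at F) \<and>
      (\<forall>\<xi> \<eta>. blinfun_apply (blinfun_apply W'' (dyad \<xi> \<eta>)) (dyad \<xi> \<eta>) \<ge> 0))"

definition rank_one_convex_on :: "(mat2 \<Rightarrow> real) \<Rightarrow> mat2 set \<Rightarrow> bool" where
  "rank_one_convex_on W S \<longleftrightarrow> (\<forall>F1\<in>S. \<forall>F2\<in>S. \<forall>t::real.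
      rank (F2 - F1) = 1 \<and> 0 \<le> t \<and> t \<le> 1 \<longrightarrow>
      W ((1 - t) *\<^sub>R F1 + t *\<^sub>R F2) \<le> (1 - t) * W F1 + t * W F2)"

end

theory Submission
  imports Defs
begin


definition PP :: "mat2 \<Rightarrow> real" where
  "PP F = sqrt ((F$1$1 + F$2$2)^2 + (F$1$2 - F$2$1)^2)"
definition QQ :: "mat2 \<Rightarrow> real" where
  "QQ F = sqrt ((F$1$1 - F$2$2)^2 + (F$1$2 + F$2$1)^2)"

lemma eig2:
  fixes M :: mat2 and mu :: real
  assumes sym: "M$1$2 = M$2$1"
  shows "(\<exists>v::real^2. v \<noteq> 0 \<and> M *v v = mu *\<^sub>R v) \<longleftrightarrow>
         (M$1$1 - mu) * (M$2$2 - mu) - M$1$2 * M$2$1 = 0"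
proof
  assume "\<exists>v::real^2. v \<noteq> 0 \<and> M *v v = mu *\<^sub>R v"
  then obtain v :: "real^2" where v: "v \<noteq> 0" "M *v v = mu *\<^sub>R v" by blast
  have e1: "(M$1$1 - mu) * v$1 + M$1$2 * v$2 = 0"
    using arg_cong[OF v(2), of "\<lambda>w. w$1"] by (simp add: matrix_vector_mult_def sum_2 algebra_simps)
  have e2: "M$2$1 * v$1 + (M$2$2 - mu) * v$2 = 0"
    using arg_cong[OF v(2), of "\<lambda>w. w$2"] by (simp add: matrix_vector_mult_def sum_2 algebra_simps)
  have nz: "v$1 \<noteq> 0 \<or> v$2 \<noteq> 0" using v(1) by (metis exhaust_2 vec_eq_iff zero_index)
  let ?d = "(M$1$1 - mu) * (M$2$2 - mu) - M$1$2 * M$2$1"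
  have "?d * v$1 = (M$2$2 - mu) * ((M$1$1 - mu) * v$1 + M$1$2 * v$2) - M$1$2 * (M$2$1 * v$1 + (M$2$2 - mu) * v$2)"
    by (simp add: algebra_simps)
  then have "?d * v$1 = 0" using e1 e2 by simp
  moreover have "?d * v$2 = (M$1$1 - mu) * (M$2$1 * v$1 + (M$2$2 - mu) * v$2) - M$2$1 * ((M$1$1 - mu) * v$1 + M$1$2 * v$2)"
    by (simp add: algebra_simps)
  then have "?d * v$2 = 0" using e1 e2 by simp
  ultimately show "?d = 0" using nz by auto
next
  assume d: "(M$1$1 - mu) * (M$2$2 - mu) - M$1$2 * M$2$1 = 0"
  show "\<exists>v::real^2. v \<noteq> 0 \<and> M *v v = mu *\<^sub>R v"
  proof (cases "M$1$2 = 0")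
    case False
    let ?v = "vector [M$1$2, mu - M$1$1] :: real^2"
    have "?v \<noteq> 0" using False by (metis vector_2(1) zero_index)
    moreover have "M *v ?v = mu *\<^sub>R ?v"
      using d sym unfolding vec_eq_iff forall_2
      by (simp add: matrix_vector_mult_def sum_2 algebra_simps)
    ultimately show ?thesis by blast
  next
    case True
    then have "M$1$1 = mu \<or> M$2$2 = mu" using d by simp
    then show ?thesis
    proof
      assume h: "M$1$1 = mu"
      let ?v = "vector [1, 0] :: real^2"
      have "?v \<noteq> 0" by (metis vector_2(1) zero_index zero_neq_one)
      moreover have "M *v ?v = mu *\<^sub>R ?v"
        using h True sym unfolding vec_eq_iff forall_2
        by (simp add: matrix_vector_mult_def sum_2)
      ultimately show ?thesis by blast
    next
      assume h: "M$2$2 = mu"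
      let ?v = "vector [0, 1] :: real^2"
      have "?v \<noteq> 0" by (metis vector_2(2) zero_index zero_neq_one)
      moreover have "M *v ?v = mu *\<^sub>R ?v"
        using h True sym unfolding vec_eq_iff forall_2
        by (simp add: matrix_vector_mult_def sum_2)
      ultimately show ?thesis by blast
    qed
  qed
qed

lemma PQ_sq: "(PP F)^2 = (F$1$1 + F$2$2)^2 + (F$1$2 - F$2$1)^2" "(QQ F)^2 = (F$1$1 - F$2$2)^2 + (F$1$2 + F$2$1)^2"
  "PP F \<ge> 0" "QQ F \<ge> 0"
  unfolding PP_def QQ_def by simp_all

lemma PQ_gt: assumes "det F > 0" shows "PP F > QQ F"
proof -
  have "(PP F)^2 - (QQ F)^2 = 4 * det F" unfolding PQ_sq det_2 by (simp add: algebra_simps power2_eq_square)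
  then have "(QQ F)^2 < (PP F)^2" using assms by simp
  then show ?thesis using PQ_sq(3,4)[of F] power2_less_imp_less by blast
qed

lemma alg1: fixes mu p q :: real
  shows "(mu - ((p+q)/2)^2) * (mu - ((p-q)/2)^2) = mu^2 - mu*(p^2+q^2)/2 + (p^2-q^2)^2/16"
  by (simp add: power2_eq_square field_simps)

lemma alg2: fixes mu a b c d :: real
  shows "mu^2 - mu*(((a+d)^2+(b-c)^2) + ((a-d)^2+(b+c)^2))/2 + (((a+d)^2+(b-c)^2) - ((a-d)^2+(b+c)^2))^2/16 = ((a^2+c^2) - mu)*((b^2+d^2) - mu) - (a*b+c*d)*(a*b+c*d)"
  by (simp add: power2_eq_square field_simps)

lemma sq_cases: fixes s x y :: real
  assumes "x \<ge> 0" "y \<ge> 0"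
  shows "(s \<ge> 0 \<and> (s^2 - x^2) * (s^2 - y^2) = 0) \<longleftrightarrow> s = x \<or> s = y"
proof -
  have "(s^2 - x^2) * (s^2 - y^2) = 0 \<longleftrightarrow> s^2 = x^2 \<or> s^2 = y^2" by simp
  then show ?thesis using assms by (metis power2_eq_iff_nonneg)
qed

lemma sing_vals_eq:
  assumes "det F > 0"
  shows "sing_vals F = {(PP F + QQ F)/2, (PP F - QQ F)/2}"
proof -
  define M where "M = transpose F ** F"
  have M: "M$1$1 = F$1$1^2 + F$2$1^2" "M$1$2 = F$1$1*F$1$2 + F$2$1*F$2$2"
     "M$2$1 = F$1$1*F$1$2 + F$2$1*F$2$2" "M$2$2 = F$1$2^2 + F$2$2^2"
    unfolding M_def by (simp_all add: matrix_matrix_mult_def transpose_def sum_2 power2_eq_square mult.commute)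
  define x where "x = (PP F + QQ F)/2"
  define y where "y = (PP F - QQ F)/2"
  have x0: "x \<ge> 0" using PQ_sq(3,4)[of F] unfolding x_def by simp
  have y0: "y \<ge> 0" using PQ_gt[OF assms] unfolding y_def by simp
  have key: "(M$1$1 - mu) * (M$2$2 - mu) - M$1$2 * M$2$1 = (mu - x^2) * (mu - y^2)" for mu
    unfolding x_def y_def alg1 PQ_sq M alg2 by simp
  have "s \<in> sing_vals F \<longleftrightarrow> s = x \<or> s = y" for s
  proof -
    have "(\<exists>v::real^2. v \<noteq> 0 \<and> M *v v = (s^2) *\<^sub>R v) \<longleftrightarrow> (M$1$1 - s^2) * (M$2$2 - s^2) - M$1$2 * M$2$1 = 0"
      by (rule eig2) (simp add: M)
    then have "s \<in> sing_vals F \<longleftrightarrow> s \<ge> 0 \<and> (s^2 - x^2) * (s^2 - y^2) = 0"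
      unfolding sing_vals_def mem_Collect_eq M_def[symmetric] key by simp
    then show ?thesis using sq_cases[OF x0 y0] by simp
  qed
  then show ?thesis unfolding x_def y_def by blast
qed

lemma lam_eqs:
  assumes "det F > 0"
  shows "lam_max F = (PP F + QQ F)/2" "lam_min F = (PP F - QQ F)/2"
  unfolding lam_max_def lam_min_def sing_vals_eq[OF assms] using PQ_sq(4)[of F] by (simp_all add: max_def min_def)



lemma lin_deriv: "((\<lambda>s::real. F1 + s *\<^sub>R (H::mat2)) has_derivative (\<lambda>x. x *\<^sub>R H)) (at s)"
  by (auto intro!: derivative_eq_intros)

lemma seg_local:
  fixes W :: "mat2 \<Rightarrow> real" and F1 H :: mat2
  assumes ell: "LH_elliptic_at W (F1 + s *\<^sub>R H)"
    and dy: "H = dyad \<xi> \<eta>" and Hnz: "H \<noteq> 0"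
  shows "DERIV (\<lambda>s. W (F1 + s *\<^sub>R H)) s :> frechet_derivative W (at (F1 + s *\<^sub>R H)) H"
    "\<exists>d. d \<ge> 0 \<and> DERIV (\<lambda>s. frechet_derivative W (at (F1 + s *\<^sub>R H)) H) s :> d"
proof -
  define F where "F = (\<lambda>s::real. F1 + s *\<^sub>R H)"
  obtain W' W'' where ev: "\<forall>\<^sub>F G in at (F s). (W has_derivative blinfun_apply (W' G)) (at G)"
    and d0: "(W has_derivative blinfun_apply (W' (F s))) (at (F s))"
    and d1: "(W' has_derivative blinfun_apply W'') (at (F s))"
    and pos: "\<And>\<xi> \<eta>. blinfun_apply (blinfun_apply W'' (dyad \<xi> \<eta>)) (dyad \<xi> \<eta>) \<ge> 0"
    using ell unfolding LH_elliptic_at_def F_def by blast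
  have Fd: "(F has_derivative (\<lambda>x. x *\<^sub>R H)) (at r)" for r unfolding F_def by (rule lin_deriv)
  have fr: "frechet_derivative W (at (F s)) = blinfun_apply (W' (F s))"
    using d0 frechet_derivative_at by metis
  have "((W \<circ> F) has_derivative (blinfun_apply (W' (F s)) \<circ> (\<lambda>x. x *\<^sub>R H))) (at s)"
    by (rule diff_chain_at[OF Fd d0])
  moreover have "(blinfun_apply (W' (F s)) \<circ> (\<lambda>x. x *\<^sub>R H)) = (*) (blinfun_apply (W' (F s)) H)"
    by (auto simp: blinfun.scaleR_right)
  ultimately show "DERIV (\<lambda>s. W (F1 + s *\<^sub>R H)) s :> frechet_derivative W (at (F1 + s *\<^sub>R H)) H"
    unfolding has_field_derivative_def fr[unfolded F_def] by (simp add: F_def comp_def)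
  have "((W' \<circ> F) has_derivative (blinfun_apply W'' \<circ> (\<lambda>x. x *\<^sub>R H))) (at s)"
    by (rule diff_chain_at[OF Fd d1])
  then have "((\<lambda>r. blinfun_apply (W' (F r)) H) has_derivative (\<lambda>x. blinfun_apply (blinfun_apply W'' (x *\<^sub>R H)) H)) (at s)"
    by (auto intro!: derivative_eq_intros simp: comp_def)
  moreover have "(\<lambda>x. blinfun_apply (blinfun_apply W'' (x *\<^sub>R H)) H) = (*) (blinfun_apply (blinfun_apply W'' H) H)"
    by (auto simp: blinfun.scaleR_right blinfun.scaleR_left)
  ultimately have D2: "DERIV (\<lambda>r. blinfun_apply (W' (F r)) H) s :> blinfun_apply (blinfun_apply W'' H) H"
    unfolding has_field_derivative_def by simp
  have flim: "filterlim F (at (F s)) (at s)"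
  proof -
    have "(F \<longlongrightarrow> F s) (at s)" unfolding F_def by (intro tendsto_intros)
    moreover have "\<forall>\<^sub>F r in at s. F r \<noteq> F s"
      unfolding F_def eventually_at_filter using Hnz by (auto intro!: always_eventually)
    ultimately show ?thesis by (simp add: filterlim_at)
  qed
  have "\<forall>\<^sub>F r in at s. (W has_derivative blinfun_apply (W' (F r))) (at (F r))"
    using eventually_compose_filterlim[OF ev flim] .
  then have ev1: "\<forall>\<^sub>F r in at s. frechet_derivative W (at (F r)) H = blinfun_apply (W' (F r)) H"
    by (rule eventually_mono) (metis frechet_derivative_at)
  have p0: "frechet_derivative W (at (F s)) H = blinfun_apply (W' (F s)) H" by (simp add: fr)
  have "\<forall>\<^sub>F r in nhds s. r \<noteq> s \<longrightarrow> frechet_derivative W (at (F r)) H = blinfun_apply (W' (F r)) H"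
    using ev1 unfolding eventually_at_filter by simp
  then have ev2: "\<forall>\<^sub>F r in nhds s. frechet_derivative W (at (F r)) H = blinfun_apply (W' (F r)) H"
    by (rule eventually_mono) (use p0 in blast)
  have "DERIV (\<lambda>r. frechet_derivative W (at (F r)) H) s :> blinfun_apply (blinfun_apply W'' H) H"
    using DERIV_cong_ev[OF refl ev2 refl] D2 by simp
  moreover have "blinfun_apply (blinfun_apply W'' H) H \<ge> 0" using pos dy by simp
  ultimately show "\<exists>d. d \<ge> 0 \<and> DERIV (\<lambda>s. frechet_derivative W (at (F1 + s *\<^sub>R H)) H) s :> d"
    unfolding F_def by blast
qed


lemma seg_convex:
  fixes W :: "mat2 \<Rightarrow> real" and F1 H :: mat2
  assumes ell: "\<And>s. s \<in> {0..1} \<Longrightarrow> LH_elliptic_at W (F1 + s *\<^sub>R H)"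
    and dy: "H = dyad \<xi> \<eta>" and Hnz: "H \<noteq> 0"
  shows "convex_on {0..1} (\<lambda>s. W (F1 + s *\<^sub>R H))"
proof -
  define f' where "f' = (\<lambda>s. frechet_derivative W (at (F1 + s *\<^sub>R H)) H)"
  define f'' where "f'' = (\<lambda>s. SOME d. d \<ge> 0 \<and> DERIV f' s :> d)"
  have h2: "f'' s \<ge> 0 \<and> DERIV f' s :> f'' s" if "s \<in> {0..1}" for s
    unfolding f''_def using seg_local(2)[OF ell[OF that] dy Hnz] unfolding f'_def[symmetric]
    by (rule someI_ex)
  show ?thesis
  proof (rule f''_ge0_imp_convex[where f' = f' and f'' = f''])
    show "convex {0..1::real}" by simp
    show "DERIV (\<lambda>s. W (F1 + s *\<^sub>R H)) x :> f' x" if "x \<in> {0..1}" for x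
      unfolding f'_def by (rule seg_local(1)[OF ell[OF that] dy Hnz])
  qed (use h2 in auto)
qed

lemma rank1_props:
  fixes H :: mat2
  assumes "rank H = 1"
  shows "det H = 0" "H \<noteq> 0" "\<exists>\<xi> \<eta>. H = dyad \<xi> \<eta>"
proof -
  show d: "det H = 0" using assms det_eq_0_rank[of H] by simp
  show "H \<noteq> 0" using assms rank_eq_0[of H] by auto
  have d': "H$1$1 * H$2$2 = H$1$2 * H$2$1" using d by (simp add: det_2)
  show "\<exists>\<xi> \<eta>. H = dyad \<xi> \<eta>"
  proof (cases "H$1$1 = 0 \<and> H$1$2 = 0")
    case True
    have "H = dyad (vector [0, 1]) (vector [H$2$1, H$2$2])"
      using True unfolding dyad_def vec_eq_iff forall_2 by simp
    then show ?thesis by blast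
  next
    case False
    define n where "n = H$1$1^2 + H$1$2^2"
    have n0: "n \<noteq> 0" using False unfolding n_def by (simp add: sum_power2_eq_zero_iff)
    define l where "l = (H$2$1 * H$1$1 + H$2$2 * H$1$2) / n"
    have l1: "l * H$1$1 = H$2$1"
    proof -
      have "l * H$1$1 = (H$2$1 * H$1$1 * H$1$1 + H$1$2 * (H$1$1 * H$2$2)) / n"
        unfolding l_def by (simp add: field_simps)
      also have "\<dots> = H$2$1 * n / n" unfolding d' n_def by (simp add: power2_eq_square algebra_simps)
      finally show ?thesis using n0 by simp
    qed
    have l2: "l * H$1$2 = H$2$2"
    proof -
      have e: "H$1$2 * (H$2$1 * H$1$1) = H$1$1 * (H$1$1 * H$2$2)"
      proof -
        have "H$1$2 * (H$2$1 * H$1$1) = H$1$1 * (H$1$2 * H$2$1)" by (simp add: algebra_simps)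
        also have "\<dots> = H$1$1 * (H$1$1 * H$2$2)" using d' by simp
        finally show ?thesis .
      qed
      have "l * H$1$2 = (H$1$2 * (H$2$1 * H$1$1) + H$2$2 * H$1$2 * H$1$2) / n"
        unfolding l_def by (simp add: field_simps)
      also have "\<dots> = (H$1$1 * (H$1$1 * H$2$2) + H$2$2 * H$1$2 * H$1$2) / n"
        by (simp only: e)
      also have "\<dots> = H$2$2 * n / n" unfolding n_def by (simp add: power2_eq_square algebra_simps)
      finally show ?thesis using n0 by simp
    qed
    have "H = dyad (vector [1, l]) (vector [H$1$1, H$1$2])"
      using l1 l2 unfolding dyad_def vec_eq_iff forall_2 by simp
    then show ?thesis by blast
  qed
qed

lemma det_line:
  fixes X H :: mat2
  assumes "det H = 0"
  shows "det (X + s *\<^sub>R H) = (1 - s) * det X + s * det (X + H)"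
  using assms by (simp add: det_2 algebra_simps)

lemma det_ev:
  fixes X E :: mat2
  assumes "det X > 0"
  shows "\<forall>\<^sub>F e in at (0::real). det (X + e *\<^sub>R E) > 0"
proof -
  have "isCont (\<lambda>e. det (X + e *\<^sub>R E)) 0"
    unfolding det_2 by (simp add: continuous_intros)
  then have "((\<lambda>e. det (X + e *\<^sub>R E)) \<longlongrightarrow> det X) (at 0)"
    unfolding isCont_def by simp
  then show ?thesis using assms by (rule order_tendstoD(1))
qed

lemma lam_cont:
  fixes X E :: mat2
  shows "((\<lambda>e. ((PP (X + e *\<^sub>R E) + QQ (X + e *\<^sub>R E))/2, (PP (X + e *\<^sub>R E) - QQ (X + e *\<^sub>R E))/2))
     \<longlongrightarrow> ((PP X + QQ X)/2, (PP X - QQ X)/2)) (at (0::real))"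
proof -
  have "isCont (\<lambda>e. ((PP (X + e *\<^sub>R E) + QQ (X + e *\<^sub>R E))/2, (PP (X + e *\<^sub>R E) - QQ (X + e *\<^sub>R E))/2)) 0"
    unfolding PP_def QQ_def by (simp add: continuous_intros)
  then show ?thesis unfolding isCont_def by simp
qed

lemma W_cont:
  fixes g :: "real \<times> real \<Rightarrow> real" and W :: "mat2 \<Rightarrow> real"
  assumes W_def: "\<And>F. F \<in> GLp2 \<Longrightarrow> W F = g (lam_max F, lam_min F)"
    and g_C1: "C1_M2 g"
    and X: "det X > 0"
  shows "((\<lambda>e. W (X + e *\<^sub>R E)) \<longlongrightarrow> W X) (at (0::real))"
proof -
  obtain G where G: "C1_on G pos_quadrant" and Gg: "\<And>x. x \<in> M2 \<Longrightarrow> G x = g x"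
    using g_C1 unfolding C1_M2_def by blast
  obtain G' where G': "\<And>x. x \<in> pos_quadrant \<Longrightarrow> (G has_derivative blinfun_apply (G' x)) (at x)"
    using G unfolding C1_on_def by blast
  define L where "L = (\<lambda>Y. ((PP Y + QQ Y)/2, (PP Y - QQ Y)/2))"
  have LM: "L Y \<in> M2" "W Y = G (L Y)" if "det Y > 0" for Y
  proof -
    have "PP Y > QQ Y" using PQ_gt[OF that] .
    then show "L Y \<in> M2" unfolding L_def M2_def using PQ_sq(4)[of Y] by auto
    then show "W Y = G (L Y)" using W_def[of Y] that Gg lam_eqs[OF that] unfolding GLp2_def L_def by simp
  qed
  have "L X \<in> pos_quadrant" using LM(1)[OF X] unfolding M2_def pos_quadrant_def by auto
  then have cG: "isCont G (L X)" using G' has_derivative_continuous by blast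
  have "((\<lambda>e. G (L (X + e *\<^sub>R E))) \<longlongrightarrow> G (L X)) (at 0)"
    by (rule isCont_tendsto_compose[OF cG]) (unfold L_def, rule lam_cont)
  moreover have "\<forall>\<^sub>F e in at (0::real). G (L (X + e *\<^sub>R E)) = W (X + e *\<^sub>R E)"
    using det_ev[OF X, of E] by (rule eventually_mono) (simp add: LM)
  ultimately show ?thesis using LM(2)[OF X] Lim_transform_eventually by fastforce
qed


theorem theorem3p2:
  fixes g :: "real \<times> real \<Rightarrow> real" and W :: "mat2 \<Rightarrow> real"
  assumes W_def: "\<And>F. F \<in> GLp2 \<Longrightarrow> W F = g (lam_max F, lam_min F)"
    and g_C2: "C2_on g intM2"
    and g_C1: "C1_M2 g"
    and ell: "\<And>F. F \<in> GLp2 \<Longrightarrow> lam_max F \<noteq> lam_min F \<Longrightarrow> LH_elliptic_at W F"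
  shows "rank_one_convex_on W GLp2"
  unfolding rank_one_convex_on_def
proof (intro ballI allI impI)
  fix F1 F2 :: mat2 and t :: real
  assume F1: "F1 \<in> GLp2" and F2: "F2 \<in> GLp2" and rt: "rank (F2 - F1) = 1 \<and> 0 \<le> t \<and> t \<le> 1"
  define H where "H = F2 - F1"
  have dH: "det H = 0" and Hnz: "H \<noteq> 0" and "\<exists>\<xi> \<eta>. H = dyad \<xi> \<eta>"
    using rank1_props[of H] rt unfolding H_def by auto
  then obtain \<xi> \<eta> where dy: "H = dyad \<xi> \<eta>" by blast
  have t0: "0 \<le> t" and t1: "t \<le> 1" using rt by auto
  have dF1: "det F1 > 0" and dF2: "det F2 > 0" using F1 F2 unfolding GLp2_def by auto
  define q1 where "q1 = H$1$1 - H$2$2"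
  define q2 where "q2 = H$1$2 + H$2$1"
  have qnz: "q1^2 + q2^2 \<noteq> 0"
  proof
    assume "q1^2 + q2^2 = 0"
    then have "q1 = 0" "q2 = 0" by (auto simp: sum_power2_eq_zero_iff)
    then have h: "H$2$2 = H$1$1" "H$2$1 = - H$1$2" unfolding q1_def q2_def by auto
    then have "H$1$1^2 + H$1$2^2 = 0" using dH unfolding det_2 by (simp add: power2_eq_square)
    then have "H$1$1 = 0" "H$1$2 = 0" by (auto simp: sum_power2_eq_zero_iff)
    then have "H = 0" using h unfolding vec_eq_iff forall_2 by simp
    then show False using Hnz by simp
  qed
  define E :: mat2 where "E = vector [vector [- q2, q1], vector [q1, q2]]"
  define p1 where "p1 = F1$1$1 - F1$2$2"
  define p2 where "p2 = F1$1$2 + F1$2$1"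
  define e0 where "e0 = (p1 * q2 - p2 * q1) / (2 * (q1^2 + q2^2))"
  define Mt where "Mt = (1 - t) *\<^sub>R F1 + t *\<^sub>R F2"
  have Mt_eq: "Mt = F1 + t *\<^sub>R H" unfolding Mt_def H_def by (simp add: algebra_simps)
  have dMt: "det Mt > 0"
  proof -
    have "det Mt = (1 - t) * det F1 + t * det F2"
      unfolding Mt_eq det_line[OF dH, of F1 t] by (simp add: H_def)
    also have "\<dots> > 0"
    proof (cases "t = 0")
      case True then show ?thesis using dF1 by simp
    next
      case False then show ?thesis using dF1 dF2 t0 t1
        by (metis add_nonneg_pos diff_ge_0_iff_ge less_eq_real_def mult_nonneg_nonneg mult_pos_pos)
    qed
    finally show ?thesis .
  qed
  have key: "W (Mt + e *\<^sub>R E) \<le> (1 - t) * W (F1 + e *\<^sub>R E) + t * W (F2 + e *\<^sub>R E)"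
    if ne: "e \<noteq> e0" and d1: "det (F1 + e *\<^sub>R E) > 0" and d2: "det (F2 + e *\<^sub>R E) > 0" for e
  proof -
    define A where "A = F1 + e *\<^sub>R E"
    have AH: "A + H = F2 + e *\<^sub>R E" unfolding A_def H_def by (simp add: algebra_simps)
    have LH: "LH_elliptic_at W (A + s *\<^sub>R H)" if s: "s \<in> {0..1}" for s
    proof -
      have "det (A + s *\<^sub>R H) = (1 - s) * det A + s * det (A + H)" by (rule det_line[OF dH])
      also have "\<dots> > 0"
      proof (cases "s = 0")
        case True then show ?thesis using d1 unfolding A_def by simp
      next
        case False then show ?thesis using d1 d2 s unfolding A_def[symmetric] AH[symmetric]
          by (metis add_nonneg_pos atLeastAtMost_iff diff_ge_0_iff_ge less_eq_real_def mult_nonneg_nonneg mult_pos_pos)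
      qed
      finally have dp: "det (A + s *\<^sub>R H) > 0" .
      have "QQ (A + s *\<^sub>R H) \<noteq> 0"
      proof
        assume "QQ (A + s *\<^sub>R H) = 0"
        then have z: "((A + s *\<^sub>R H)$1$1 - (A + s *\<^sub>R H)$2$2)^2 + ((A + s *\<^sub>R H)$1$2 + (A + s *\<^sub>R H)$2$1)^2 = 0"
          unfolding QQ_def by simp
        have c1: "p1 - 2 * e * q2 + s * q1 = 0" and c2: "p2 + 2 * e * q1 + s * q2 = 0"
          using z unfolding sum_power2_eq_zero_iff A_def E_def p1_def p2_def q1_def q2_def
          by (auto simp: algebra_simps)
        have "p1 * q2 - p2 * q1 - 2 * e * (q1^2 + q2^2) = (p1 - 2 * e * q2 + s * q1) * q2 - (p2 + 2 * e * q1 + s * q2) * q1"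
          by (simp add: power2_eq_square algebra_simps)
        also have "\<dots> = 0" using c1 c2 by simp
        finally have h: "p1 * q2 - p2 * q1 = e * (2 * (q1^2 + q2^2))" by simp
        have K: "2 * (q1^2 + q2^2) \<noteq> 0" using qnz by (simp only: mult_eq_0_iff) simp
        have "e0 = e" unfolding e0_def h using K by (rule nonzero_mult_div_cancel_right)
        then have "e = e0" by simp
        then show False using ne by simp
      qed
      then have "lam_max (A + s *\<^sub>R H) \<noteq> lam_min (A + s *\<^sub>R H)"
        using lam_eqs[OF dp] by simp
      then show ?thesis using ell dp unfolding GLp2_def by simp
    qed
    have cv: "convex_on {0..1} (\<lambda>s. W (A + s *\<^sub>R H))"
      by (rule seg_convex[OF LH dy Hnz])
    have c: "\<And>x y u v. x \<in> {0..1} \<Longrightarrow> y \<in> {0..1} \<Longrightarrow> u \<ge> 0 \<Longrightarrow> v \<ge> 0 \<Longrightarrow> u + v = 1 \<Longrightarrow>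
        W (A + (u *\<^sub>R x + v *\<^sub>R y) *\<^sub>R H) \<le> u * W (A + x *\<^sub>R H) + v * W (A + y *\<^sub>R H)"
      using cv unfolding convex_on_def by blast
    have ineq: "W (A + ((1 - t) *\<^sub>R (0::real) + t *\<^sub>R 1) *\<^sub>R H) \<le> (1 - t) * W (A + 0 *\<^sub>R H) + t * W (A + 1 *\<^sub>R H)"
      by (rule c) (use t0 t1 in auto)
    have eq0: "A + ((1 - t) *\<^sub>R (0::real) + t *\<^sub>R 1) *\<^sub>R H = Mt + e *\<^sub>R E" unfolding A_def Mt_eq by (simp add: algebra_simps)
    have eq1: "A + 0 *\<^sub>R H = F1 + e *\<^sub>R E" unfolding A_def by simp
    have eq2: "A + 1 *\<^sub>R H = F2 + e *\<^sub>R E" using AH by simp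
    show ?thesis using ineq unfolding eq0 eq1 eq2 .
  qed
  have ev: "\<forall>\<^sub>F e in at (0::real). W (Mt + e *\<^sub>R E) \<le> (1 - t) * W (F1 + e *\<^sub>R E) + t * W (F2 + e *\<^sub>R E)"
  proof -
    have "\<forall>\<^sub>F e in at (0::real). e \<noteq> e0" by (rule eventually_neq_at_within)
    moreover have "\<forall>\<^sub>F e in at (0::real). det (F1 + e *\<^sub>R E) > 0" by (rule det_ev[OF dF1])
    moreover have "\<forall>\<^sub>F e in at (0::real). det (F2 + e *\<^sub>R E) > 0" by (rule det_ev[OF dF2])
    ultimately show ?thesis by eventually_elim (rule key)
  qed
  have l1: "((\<lambda>e. W (Mt + e *\<^sub>R E)) \<longlongrightarrow> W Mt) (at (0::real))" by (rule W_cont[OF W_def g_C1 dMt])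
  have l2: "((\<lambda>e. (1 - t) * W (F1 + e *\<^sub>R E) + t * W (F2 + e *\<^sub>R E)) \<longlongrightarrow> (1 - t) * W F1 + t * W F2) (at (0::real))"
    by (intro tendsto_intros W_cont[OF W_def g_C1 dF1] W_cont[OF W_def g_C1 dF2])
  have "W Mt \<le> (1 - t) * W F1 + t * W F2"
    by (rule tendsto_le[OF _ l2 l1 ev]) simp
  then show "W ((1 - t) *\<^sub>R F1 + t *\<^sub>R F2) \<le> (1 - t) * W F1 + t * W F2" unfolding Mt_def .
qed

end
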